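(* For $n\ge0$ let $A_n=\sum_{r=0}^n n!/r!$ (so $A_n/n!=\sum_{r=0}^n 1/r!$), let $d_n=\gcd(A_n,n!)$, let $N_n=A_n/d_n$ be the numerator of $\sum_{r=0}^n1/r!$ in lowest terms, and let $R_n=\gcd(N_n,N_{n+2})$. Let $$P^{\ast}=\{p \text{ prime} : 0!-1!+2!-3!+\cdots+(-1)^{p-1}(p-1)!\equiv 0 \pmod p\}.$$ Then the terms of the sequence $R_0,R_1,\dots$ are ones and all the primes of $P^\ast$. More precisely: $R_1=2$; for every odd $p\in P^{\ast}$, $R_{p-3}=p$; and $R_n=1$ for all other $n\ge 0$. *)

theory Defs
  imports "HOL-Computational_Algebra.Primes"
begin

definition A :: "nat \<Rightarrow> nat" where
  "A n = (\<Sum>r=0..n. fact n div fact r)"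

definition d :: "nat \<Rightarrow> nat" where
  "d n = gcd (A n) (fact n)"

definition N :: "nat \<Rightarrow> nat" where
  "N n = A n div d n"

definition R :: "nat \<Rightarrow> nat" where
  "R n = gcd (N n) (N (n + 2))"

definition Pstar :: "nat set" where
  "Pstar = {p. prime p \<and> (\<Sum>k<p. (-1::int) ^ k * fact k) mod int p = 0}"

end

theory Submission
  imports Defs
begin

lemma A_0: "A 0 = 1" by (simp add: A_def)

lemma A_Suc: "A (Suc n) = Suc n * A n + 1"
proof -
  have "A (Suc n) = (\<Sum>r=0..n. fact (Suc n) div fact r) + fact (Suc n) div fact (Suc n)"
    by (simp add: A_def)
  also have "(\<Sum>r=0..n. fact (Suc n) div fact r) = (\<Sum>r=0..n. Suc n * (fact n div (fact r::nat)))"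
  proof (rule sum.cong)
    fix r assume "r \<in> {0..n}"
    then have "(fact r::nat) dvd fact n" by (simp add: fact_dvd)
    then show "fact (Suc n) div fact r = Suc n * (fact n div (fact r::nat))"
      by (simp add: div_mult_swap)
  qed simp
  finally show ?thesis by (simp add: A_def sum_distrib_left)
qed

lemma A_pos: "A n > 0"
  by (cases n) (auto simp: A_0 A_Suc)

lemma A_2: "A (n+2) = (n+2)*(n+1) * A n + (n+3)"
  by (simp add: A_Suc[of "Suc n"] A_Suc[of n] algebra_simps)

lemma gcd_split: "a = gcd a b * (a div (gcd a b :: nat))"
  by simp

lemma N_dvd_A: "N n dvd A n"
proof -
  have "A n = d n * N n" unfolding N_def d_def by simp
  then show ?thesis by (metis dvd_triv_right)
qed

lemma R_dvd: "R n dvd n + 3"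
proof -
  have h1: "R n dvd A n" "R n dvd A (n+2)" unfolding R_def
    using N_dvd_A dvd_trans gcd_dvd1 gcd_dvd2 by blast+
  have h2: "R n dvd (n+2)*(n+1)*A n" using h1(1) by (rule dvd_mult)
  have h3: "R n dvd (n+2)*(n+1) * A n + (n+3)" using h1(2) by (simp only: A_2)
  show ?thesis using h2 h3 dvd_add_right_iff by blast
qed

lemma L: "(q::nat) dvd a div gcd a b \<Longrightarrow> q^k dvd b \<Longrightarrow> q^(k+1) dvd a"
proof (induction k)
  case 0
  have "a div gcd a b dvd a" by (subst (2) gcd_split[of a b]) (rule dvd_triv_right)
  then show ?case using 0 dvd_trans by simp
next
  case (Suc k)
  have "q^k dvd q^Suc k" by simp
  then have "q^k dvd b" using Suc.prems(2) dvd_trans by blast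
  then have "q^(k+1) dvd a" using Suc by blast
  then have "q^(Suc k) dvd gcd a b" using Suc.prems(2) by simp
  then have "q^(Suc k) * q dvd gcd a b * (a div gcd a b)" using Suc.prems(1) by (rule mult_dvd_mono)
  then show ?case by (simp add: mult.commute)
qed

lemma Lp:
  assumes "prime (p::nat)" "\<not> p dvd b" "p dvd a"
  shows "p dvd a div gcd a b"
proof -
  have "\<not> p dvd gcd a b" using assms(2) gcd_dvd2 dvd_trans by blast
  moreover have "p dvd gcd a b * (a div gcd a b)" using assms(3) by simp
  ultimately show ?thesis using assms(1) prime_dvd_mult_iff by blast
qed

lemma rearr: "(a::int) * b * c * e + z = c * (a * b * e) + z" by (simp add: ac_simps)

lemma cong_A:
  assumes "j \<le> p - 1" "p > 0"
  shows "int (A (p-1)) mod int p = ((\<Sum>k<j. (-1::int)^k * fact k) + (-1)^j * fact j * int (A (p-1-j))) mod int p"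
  using assms(1)
proof (induction j)
  case 0 then show ?case by simp
next
  case (Suc j)
  have e: "p - 1 - j = Suc (p - 1 - Suc j)" using Suc.prems by simp
  have e2: "int (Suc (p - 1 - Suc j)) = int p - int (Suc j)" using Suc.prems assms(2) by simp
  have "((-1::int)^j * fact j * int (A (p-1-j))) mod int p
     = ((-1)^j * fact j * ((int p - int (Suc j)) * int (A (p-1-Suc j)) + 1)) mod int p"
    by (subst e, simp only: A_Suc of_nat_add of_nat_mult e2) simp
  also have "\<dots> = ((-1)^j * fact j * int p * int (A (p-1-Suc j))
      + ((-1)^j * fact j + (-1)^Suc j * fact (Suc j) * int (A (p-1-Suc j)))) mod int p"
    by (simp add: algebra_simps fact_Suc)
  also have "\<dots> = (int p * ((-1)^j * fact j * int (A (p-1-Suc j)))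
      + ((-1)^j * fact j + (-1)^Suc j * fact (Suc j) * int (A (p-1-Suc j)))) mod int p"
    by (simp only: rearr)
  also have "\<dots> = ((-1)^j * fact j + (-1)^Suc j * fact (Suc j) * int (A (p-1-Suc j))) mod int p"
    by (rule mod_mult_self4)
  finally have h: "((-1::int)^j * fact j * int (A (p-1-j))) mod int p =
      ((-1)^j * fact j + (-1)^Suc j * fact (Suc j) * int (A (p-1-Suc j))) mod int p" .
  have "int (A (p-1)) mod int p = ((\<Sum>k<j. (-1::int)^k * fact k) + (-1)^j * fact j * int (A (p-1-j))) mod int p"
    using Suc by simp
  also have "\<dots> = ((\<Sum>k<j. (-1::int)^k * fact k) + ((-1)^j * fact j * int (A (p-1-j))) mod int p) mod int p"
    by (simp add: mod_add_right_eq)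
  also have "\<dots> = ((\<Sum>k<j. (-1::int)^k * fact k) + ((-1)^j * fact j + (-1)^Suc j * fact (Suc j) * int (A (p-1-Suc j)))) mod int p"
    by (simp only: h mod_add_right_eq)
  also have "\<dots> = ((\<Sum>k<Suc j. (-1::int)^k * fact k) + (-1)^Suc j * fact (Suc j) * int (A (p-1-Suc j))) mod int p"
    by (simp add: algebra_simps)
  finally show ?case .
qed

lemma A_Pstar:
  assumes "prime p"
  shows "p \<in> Pstar \<longleftrightarrow> p dvd A (p - 1)"
proof -
  have p0: "p > 0" using assms prime_gt_0_nat by blast
  have "int (A (p-1)) mod int p = ((\<Sum>k<p-1. (-1::int)^k * fact k) + (-1)^(p-1) * fact (p-1) * int (A 0)) mod int p"
    using cong_A[of "p-1" p] p0 by simp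
  also have "\<dots> = (\<Sum>k<p. (-1::int)^k * fact k) mod int p"
  proof -
    obtain m where m: "p = Suc m" using p0 by (cases p) auto
    show ?thesis unfolding m by (simp add: A_0)
  qed
  finally have e: "int (A (p-1)) mod int p = (\<Sum>k<p. (-1::int)^k * fact k) mod int p" .
  have "p dvd A (p-1) \<longleftrightarrow> int (A (p-1)) mod int p = 0"
    by (metis int_dvd_int_iff dvd_eq_mod_eq_0)
  then show ?thesis using assms e unfolding Pstar_def by simp
qed

lemma comp_dvd_fact:
  assumes "\<not> prime c" "c \<ge> 6"
  shows "c dvd fact (c - 3)"
proof -
  obtain a where a: "a dvd c" "a \<noteq> 1" "a \<noteq> c" using assms prime_nat_iff by auto
  then obtain b where b: "c = a * b" by auto
  have gen: "x * y dvd fact (c-3)" if xy: "c = x * y" "2 \<le> x" "x \<le> y" for x y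
  proof (cases "x = y")
    case False
    have "x dvd fact (y - 1)" using that False by (intro dvd_fact) auto
    then have "x * y dvd fact (y-1) * y" by simp
    also have "fact (y-1) * y = (fact y :: nat)"
    proof -
      obtain z where "y = Suc z" using xy by (cases y) auto
      then show ?thesis by (simp add: fact_Suc)
    qed
    also have "\<dots> dvd fact (c-3)" using that False
    proof -
      have "y \<ge> 3" using that False by simp
      then have "y + 3 \<le> x * y"
      proof -
        have "2 * y \<le> x * y" using xy by simp
        then show ?thesis using \<open>y \<ge> 3\<close> by linarith
      qed
      then show ?thesis using xy by (intro fact_dvd) simp
    qed
    finally show ?thesis .
  next
    case True
    have x3: "x \<ge> 3" using that True assms by (cases "x = 2") auto
    have "x dvd fact (2*x - 1)" using x3 by (intro dvd_fact) auto
    then have "x * (2*x) dvd fact (2*x-1) * (2*x)" by (rule mult_dvd_mono) simp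
    also have "fact (2*x-1) * (2*x) = (fact (2*x) :: nat)"
    proof -
      have "2*x = Suc (2*x-1)" using x3 by simp
      then show ?thesis by (metis fact_Suc mult.commute of_nat_id)
    qed
    also have "\<dots> dvd fact (c-3)"
    proof (intro fact_dvd)
      have "x * x \<ge> 3 * x" using x3 by simp
      moreover have "c = x * x" using xy True by simp
      ultimately show "2*x \<le> c - 3" using x3 by linarith
    qed
    finally have "x * (2*x) dvd fact (c-3)" .
    moreover have "x * x dvd x * (2*x)" by simp
    ultimately show ?thesis using True dvd_trans by blast
  qed
  have a0: "a \<noteq> 0" using a assms by auto
  have b0: "b \<noteq> 0" "b \<noteq> 1" using b a assms by auto
  show ?thesis
  proof (cases "a \<le> b")
    case True then show ?thesis using gen[of a b] b a0 a by simp
  next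
    case False then show ?thesis using gen[of b a] b b0 by (simp add: mult.commute)
  qed
qed

lemma N_eq: "N n = A n div gcd (A n) (fact n)" by (simp add: N_def d_def)

lemma part1: "R 1 = 2"
proof -
  have a1: "A 1 = 2" unfolding One_nat_def A_Suc A_0 by simp
  have a2: "A 2 = 5" using A_Suc[of 1] a1 by (simp add: numeral_eq_Suc)
  have a3: "A 3 = 16" using A_Suc[of 2] a2 by (simp add: numeral_eq_Suc)
  have f3: "fact 3 = (6::nat)" by (simp add: numeral_eq_Suc)
  have "N 1 = 2" using a1 by (simp add: N_eq del: One_nat_def)
  moreover have "N 3 = 8" by (simp add: N_eq a3 f3 gcd_non_0_nat)
  moreover have t: "(1::nat) + 2 = 3" by simp
  ultimately show ?thesis unfolding R_def t by simp
qed

lemma part2: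
  assumes "p \<in> Pstar" "odd p"
  shows "R (p - 3) = p"
proof -
  have pr: "prime p" using assms Pstar_def by auto
  have p2: "p \<ge> 2" using pr prime_ge_2_nat by blast
  have p3: "p \<ge> 3" using p2 assms(2) by (cases "p = 2") auto
  have dA: "p dvd A (p - 1)" using A_Pstar pr assms by blast
  have e: "A (p - 1) = (p - 1) * (p - 2) * A (p - 3) + p"
    using A_2[of "p - 3"] p3 by (simp add: numeral_eq_Suc Suc_diff_Suc)
  have "p dvd (p - 1) * (p - 2) * A (p - 3)" using dA e by (metis dvd_add_left_iff dvd_refl)
  moreover have "\<not> p dvd p - 1" "\<not> p dvd p - 2" using p3 by (auto dest: dvd_imp_le)
  ultimately have dA3: "p dvd A (p - 3)" using pr by (simp add: prime_dvd_mult_iff)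
  have "\<not> p dvd fact (p - 1)" "\<not> p dvd fact (p - 3)" using pr p3 by (auto simp: prime_dvd_fact_iff)
  then have "p dvd N (p - 3)" "p dvd N (p - 3 + 2)"
    using Lp[OF pr] dA dA3 p3 by (auto simp: N_eq numeral_eq_Suc Suc_diff_Suc)
  then have "p dvd R (p - 3)" by (simp add: R_def)
  moreover have "R (p - 3) dvd p" using R_dvd[of "p - 3"] p3 by simp
  ultimately show ?thesis by (simp add: dvd_antisym)
qed

lemma part3:
  assumes "n \<noteq> 1" "\<not> (\<exists>p \<in> Pstar. odd p \<and> n = p - 3)"
  shows "R n = 1"
proof (rule ccontr)
  assume "R n \<noteq> 1"
  then obtain q where q: "prime q" "q dvd R n" using prime_factor_nat by blast
  have qN: "q dvd N n" "q dvd N (n + 2)" using q(2) unfolding R_def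
    using dvd_trans gcd_dvd1 gcd_dvd2 by blast+
  have qc: "q dvd n + 3" using q(2) R_dvd dvd_trans by blast
  show False
  proof (cases "prime (n + 3)")
    case True
    have "q \<noteq> 1" using q(1) by auto
    then have "q = n + 3" using True qc unfolding prime_nat_iff by blast
    moreover have "q dvd A (n + 2)" using qN(2) N_dvd_A dvd_trans by blast
    moreover have "n + 3 - 1 = n + 2" by simp
    ultimately have "n + 3 dvd A (n + 3 - 1)" by simp
    then have "n + 3 \<in> Pstar" using A_Pstar True by blast
    moreover have "odd (n + 3)" using True by (intro prime_odd_nat) auto
    ultimately show False using assms(2) by force
  next
    case False
    have c6: "n + 3 \<ge> 6"
    proof -
      have "n \<noteq> 0"
      proof
        assume "n = 0" then have "prime (n + 3)" by simp
        then show False using False by blast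
      qed
      moreover have "n \<noteq> 2"
      proof
        assume "n = 2" then have "prime (n + 3)" by simp
        then show False using False by blast
      qed
      ultimately show ?thesis using assms(1) by simp
    qed
    have cf: "n + 3 dvd fact n" using comp_dvd_fact[OF False c6] by simp
    have "q ^ k dvd fact n" for k
    proof (induction k)
      case 0 then show ?case by simp
    next
      case (Suc k)
      have "fact n dvd (fact (n + 2) :: nat)" by (simp add: fact_dvd)
      then have k2: "q ^ k dvd fact (n + 2)" using Suc dvd_trans by blast
      have q1: "q dvd A n div gcd (A n) (fact n)" using qN(1) by (simp only: N_eq)
      have q2: "q dvd A (n+2) div gcd (A (n+2)) (fact (n+2))" using qN(2) by (simp only: N_eq)
      have h1: "q ^ (k+1) dvd A n" using L[OF q1 Suc] .
      have h2: "q ^ (k+1) dvd A (n + 2)" using L[OF q2 k2] .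
      have "q ^ (k+1) dvd (n+2)*(n+1)*A n" using h1 by (rule dvd_mult)
      moreover have "q ^ (k+1) dvd (n+2)*(n+1)*A n + (n + 3)" using h2 by (simp only: A_2)
      ultimately have "q ^ (k+1) dvd (n+2)*(n+1)*A n" "q ^ (k+1) dvd (n+2)*(n+1)*A n + (n + 3)" by blast+
      then have "q ^ (k+1) dvd n + 3" using dvd_add_right_iff by blast
      then show ?case using cf dvd_trans by (metis Suc_eq_plus1)
    qed
    then have "q ^ fact n \<le> fact n" by (simp add: dvd_imp_le)
    moreover have "(fact n :: nat) < 2 ^ fact n" by simp
    moreover have "2 ^ fact n \<le> q ^ fact n" using prime_ge_2_nat[OF q(1)] by (simp add: power_mono)
    ultimately show False by simp
  qed
qed

theorem theorem5p1:
  shows "R 1 = 2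
    \<and> (\<forall>p \<in> Pstar. odd p \<longrightarrow> R (p - 3) = p)
    \<and> (\<forall>n. n \<noteq> 1 \<and> \<not> (\<exists>p \<in> Pstar. odd p \<and> n = p - 3) \<longrightarrow> R n = 1)"
  using part1 part2 part3 by blast

end
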